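(* Let $n\ge1$, $k\ge2$, $r=n(k-1)$, and let $\mathbf c_0$ be a stable configuration on the hyperpath $P_n^k$ with bank vertex $0$. Let $\mathcal G(\mathbf c_0)$ be its firing graph. Then: (i) for every $t\in[n]$ and every configuration $\mathbf c$ of $\mathcal G(\mathbf c_0)$, the vertex $t(k-1)$ is fired at $\mathbf c$ (i.e. $\mathbf c$ is not stable and $u_{\mathbf c}=t(k-1)$) if and only if $\mathbf c(t(k-1))=k-1$; (ii) for every configuration $\mathbf c$ of $\mathcal G(\mathbf c_0)$, $\omega(\mathbf c)\ge\omega(\mathbf c_0)$.
   Context: The $k$-uniform hyperpath $P_n^k$ has vertex set $\{0,1,\dots,n(k-1)\}$ and edges $\mathbf e_t=\{(k-1)(t-1),(k-1)(t-1)+1,\dots,(k-1)t\}$ for $t\in[n]$. A configuration is a function $\mathbf c:[r]\to\mathbb Z_{\ge0}$ (the value at the bank vertex $0$ is ignored), with weight $\omega(\mathbf c)=\sum_{v=1}^r\mathbf c(v)$. It is stable if $0\le\mathbf c(v)\le k-2$ for all $v\in[r]$. For a stable $\mathbf c_0$ put $\bar{\mathbf c}_0(v)=\mathbf c_0(v)+1$ for $v\in[k-1]$ and $\bar{\mathbf c}_0(v)=\mathbf c_0(v)$ otherwise. For a non-stable configuration $\mathbf c$ let $u_{\mathbf c}=\max\{v\in[r]:\mathbf c(v)\ge k-1\}$; for each edge $\mathbf e$ containing $u_{\mathbf c}$ define $\mathbf c_{\mathbf e}$ by $\mathbf c_{\mathbf e}(u_{\mathbf c})=\mathbf c(u_{\mathbf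 c})-(k-1)$, $\mathbf c_{\mathbf e}(v)=\mathbf c(v)+1$ for $v\in\mathbf e\setminus\{u_{\mathbf c},0\}$, and $\mathbf c_{\mathbf e}(v)=\mathbf c(v)$ otherwise ("firing $u_{\mathbf c}$ on $\mathbf e$"). The firing graph $\mathcal G(\mathbf c_0)$ is the directed graph whose vertices are $\mathbf c_0$ together with all configurations obtainable from $\bar{\mathbf c}_0$ by finitely many such firing steps (each applied to a non-stable configuration), and whose arrows are $\mathbf c_0\to\bar{\mathbf c}_0$ and $\mathbf c\to\mathbf c_{\mathbf e}$ for every non-stable vertex $\mathbf c$ and every edge $\mathbf e\ni u_{\mathbf c}$. *)

theory Defs
  imports Main
begin

text \<open>Hyperpath P_n^k: vertices 0..n(k-1), edge t = {(k-1)(t-1) .. (k-1)t} for t in [n].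
  Configurations are functions nat => nat; only values on [r] = {1..r} matter.
  Convention: a configuration is represented canonically with value 0 outside [r]
  (in particular at the bank vertex 0).\<close>

definition hp_r :: "nat \<Rightarrow> nat \<Rightarrow> nat" where
  "hp_r n k = n * (k - 1)"

definition hp_edge :: "nat \<Rightarrow> nat \<Rightarrow> nat set" where
  "hp_edge k t = {(k - 1) * (t - 1) .. (k - 1) * t}"

definition is_config :: "nat \<Rightarrow> nat \<Rightarrow> (nat \<Rightarrow> nat) \<Rightarrow> bool" where
  "is_config n k c \<longleftrightarrow> (\<forall>v. v \<notin> {1..hp_r n k} \<longrightarrow> c v = 0)"

definition weight :: "nat \<Rightarrow> nat \<Rightarrow> (nat \<Rightarrow> nat) \<Rightarrow> nat" where
  "weight n k c = (\<Sum>v = 1..hp_r n k. c v)"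

definition stable :: "nat \<Rightarrow> nat \<Rightarrow> (nat \<Rightarrow> nat) \<Rightarrow> bool" where
  "stable n k c \<longleftrightarrow> (\<forall>v\<in>{1..hp_r n k}. c v \<le> k - 2)"

definition cbar :: "nat \<Rightarrow> (nat \<Rightarrow> nat) \<Rightarrow> (nat \<Rightarrow> nat)" where
  "cbar k c = (\<lambda>v. if v \<in> {1..k - 1} then c v + 1 else c v)"

definition u_fire :: "nat \<Rightarrow> nat \<Rightarrow> (nat \<Rightarrow> nat) \<Rightarrow> nat" where
  "u_fire n k c = Max {v \<in> {1..hp_r n k}. k - 1 \<le> c v}"

definition fire_on :: "nat \<Rightarrow> nat \<Rightarrow> (nat \<Rightarrow> nat) \<Rightarrow> nat set \<Rightarrow> (nat \<Rightarrow> nat)" where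
  "fire_on n k c e = (\<lambda>v. if v = u_fire n k c then c v - (k - 1)
                          else if v \<in> e \<and> v \<noteq> 0 then c v + 1 else c v)"

inductive reach :: "nat \<Rightarrow> nat \<Rightarrow> (nat \<Rightarrow> nat) \<Rightarrow> (nat \<Rightarrow> nat) \<Rightarrow> bool"
  for n k c0 where
  start: "reach n k c0 (cbar k c0)"
| step: "reach n k c0 c \<Longrightarrow> \<not> stable n k c \<Longrightarrow> t \<in> {1..n} \<Longrightarrow>
           u_fire n k c \<in> hp_edge k t \<Longrightarrow> reach n k c0 (fire_on n k c (hp_edge k t))"

definition firing_graph_vertices :: "nat \<Rightarrow> nat \<Rightarrow> (nat \<Rightarrow> nat) \<Rightarrow> (nat \<Rightarrow> nat) set" where
  "firing_graph_vertices n k c0 = insert c0 {c. reach n k c0 c}"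

definition firing_graph_arrows :: "nat \<Rightarrow> nat \<Rightarrow> (nat \<Rightarrow> nat) \<Rightarrow> ((nat \<Rightarrow> nat) \<times> (nat \<Rightarrow> nat)) set" where
  "firing_graph_arrows n k c0 = insert (c0, cbar k c0)
     {(c, fire_on n k c (hp_edge k t)) | c t. c \<in> firing_graph_vertices n k c0 \<and>
        \<not> stable n k c \<and> t \<in> {1..n} \<and> u_fire n k c \<in> hp_edge k t}"

end

theory Submission
  imports Defs
begin

definition Susp :: "nat \<Rightarrow> (nat \<Rightarrow> nat) \<Rightarrow> nat \<Rightarrow> bool" where
  "Susp K d t \<longleftrightarrow> d (K*(t-1)) + 1 + card {v \<in> {K*(t-1)<..<K*t}. d (K*(t-1)) \<le> d v} \<le> K
     \<and> (\<forall>v\<in>{K*(t-1)<..<K*t}. d v \<le> K + d (K*(t-1))) \<and> d (K*t) \<le> K"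

definition Act0 :: "nat \<Rightarrow> (nat \<Rightarrow> nat) \<Rightarrow> nat \<Rightarrow> bool" where
  "Act0 K d s \<longleftrightarrow> d (K*(s-1)) + card {v \<in> {K*(s-1)<..K*s}. d (K*(s-1)) \<le> d v} \<le> K
     \<and> (\<forall>v\<in>{K*(s-1)<..K*s}. d v \<le> K + d (K*(s-1))) \<and> d (K*s) \<le> K"

definition Inv :: "nat \<Rightarrow> nat \<Rightarrow> (nat \<Rightarrow> nat) \<Rightarrow> bool" where
  "Inv n k d \<longleftrightarrow> (stable n k d \<and> d 0 \<le> k - 1) \<or>
     (\<not> stable n k d \<and> (\<exists>s. 1 \<le> s \<and> s \<le> n \<and> u_fire n k d \<in> {(k-1)*(s-1)<..(k-1)*s}
        \<and> (\<forall>t. 1 \<le> t \<longrightarrow> t < s \<longrightarrow> Susp (k-1) d t) \<and> Act0 (k-1) d s))"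

definition ext_fire :: "nat \<Rightarrow> (nat \<Rightarrow> nat) \<Rightarrow> nat \<Rightarrow> nat set \<Rightarrow> (nat \<Rightarrow> nat)" where
  "ext_fire k d u e = (\<lambda>v. if v = u then d v - (k - 1) else if v \<in> e then d v + 1 else d v)"

lemma level_exists:
  fixes K v n :: nat
  assumes "K \<ge> 1" "1 \<le> v" "v \<le> n*K"
  shows "\<exists>s. 1 \<le> s \<and> s \<le> n \<and> v \<in> {K*(s-1)<..K*s}"
proof -
  define s where "s = (v - 1) div K + 1"
  have a: "K * ((v-1) div K) \<le> v - 1" by simp
  have b0: "v - 1 = K*((v-1) div K) + (v-1) mod K" by simp
  have b1: "(v-1) mod K < K" using assms(1) by simp
  have b: "v - 1 < K * ((v-1) div K + 1)"
  proof -
    have "K*((v-1) div K + 1) = K*((v-1) div K) + K" by simp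
    then show ?thesis using b0 b1 by linarith
  qed
  have "K*(s-1) < v" using le_less_trans[OF a, of v] assms(2) by (simp add: s_def)
  moreover have "v \<le> K*s" using b assms(2) by (simp add: s_def)
  moreover have "s \<le> n"
  proof (rule ccontr)
    assume "\<not> s \<le> n" then have "n + 1 \<le> s" by simp
    then have "K*(n+1) \<le> K*s" by (rule mult_le_mono2)
    then have "K*n + K \<le> K*s" by (simp add: algebra_simps)
    moreover have "K*s \<le> v - 1 + K" using a by (simp add: s_def algebra_simps)
    ultimately show False using assms by (simp add: mult.commute)
  qed
  ultimately show ?thesis by (auto simp: s_def)
qed

lemma level_le:
  fixes K v s s0 :: nat
  assumes "K \<ge> 1" "v \<in> {K*(s-1)<..K*s}" "v \<le> K*s0"
  shows "s \<le> s0"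
proof -
  have "K*(s-1) < v" using assms(2) by simp
  then have "K*(s-1) < K*s0" using assms(3) by (rule less_le_trans)
  then have "s - 1 < s0" by simp
  then show ?thesis by simp
qed

lemma edge_level:
  fixes K u s t :: nat
  assumes "K \<ge> 1" "u \<in> {K*(s-1)<..K*s}" "u \<in> {K*(t-1)..K*t}"
  shows "t = s \<or> (t = s+1 \<and> u = K*s)"
proof -
  have x1: "K*(s-1) < u" "u \<le> K*s" using assms(2) by auto
  have x2: "K*(t-1) \<le> u" "u \<le> K*t" using assms(3) by auto
  have "K*(s-1) < K*t" using x1(1) x2(2) by (rule less_le_trans)
  then have 1: "s - 1 < t" by simp
  have "K*(t-1) \<le> K*s" using x2(1) x1(2) by (rule order_trans)
  then have 2: "t - 1 \<le> s" using assms(1) by simp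
  show ?thesis
  proof (cases "t = s")
    case False
    then have "t = s + 1" using 1 2 by linarith
    then show ?thesis using assms by auto
  qed simp
qed

lemma ufire_props:
  assumes "k \<ge> 2" "\<not> stable n k d"
  shows "u_fire n k d \<in> {1..hp_r n k}" "k - 1 \<le> d (u_fire n k d)"
        "\<And>v. v \<in> {1..hp_r n k} \<Longrightarrow> k - 1 \<le> d v \<Longrightarrow> v \<le> u_fire n k d"
proof -
  let ?S = "{v \<in> {1..hp_r n k}. k - 1 \<le> d v}"
  have fin: "finite ?S" by simp
  obtain v where "v \<in> {1..hp_r n k}" "\<not> d v \<le> k - 2" using assms(2) by (auto simp: stable_def)
  then have "v \<in> ?S" using assms(1) by auto
  then have ne: "?S \<noteq> {}" by blast
  have "Max ?S \<in> ?S" using Max_in[OF fin ne] .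
  then show "u_fire n k d \<in> {1..hp_r n k}" "k - 1 \<le> d (u_fire n k d)" by (auto simp: u_fire_def)
  show "\<And>v. v \<in> {1..hp_r n k} \<Longrightarrow> k - 1 \<le> d v \<Longrightarrow> v \<le> u_fire n k d"
    unfolding u_fire_def using fin by (intro Max_ge) auto
qed

lemma above_ufire:
  assumes "k \<ge> 2" "\<not> stable n k d" "v \<in> {1..hp_r n k}" "u_fire n k d < v"
  shows "d v < k - 1"
  using ufire_props(3)[OF assms(1,2) assms(3)] assms(4) by fastforce

lemma stable_upd: "stable n k (c(0:=b)) = stable n k c"
  by (auto simp: stable_def)

lemma ufire_upd: "u_fire n k (c(0:=b)) = u_fire n k c"
proof -
  have "{v \<in> {1..hp_r n k}. k - 1 \<le> (c(0:=b)) v} = {v \<in> {1..hp_r n k}. k - 1 \<le> c v}" by auto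
  then show ?thesis by (simp add: u_fire_def)
qed

lemma Susp_transfer:
  fixes K t :: nat
  assumes "K \<ge> 1" "t \<ge> 1" "Susp K d t" "\<And>v. v < K*t \<Longrightarrow> d' v = d v" "d' (K*t) \<le> K"
  shows "Susp K d' t"
proof -
  have lt: "K*(t-1) < K*t" using assms(1,2) by simp
  have e: "d' (K*(t-1)) = d (K*(t-1))" using assms(4) lt by blast
  have s: "{v \<in> {K*(t-1)<..<K*t}. d' (K*(t-1)) \<le> d' v} = {v \<in> {K*(t-1)<..<K*t}. d (K*(t-1)) \<le> d v}"
    using assms(4) e by auto
  show ?thesis using assms(3,5) s e assms(4) unfolding Susp_def by auto
qed

lemma Susp_Act0:
  fixes K t :: nat
  assumes "K \<ge> 1" "t \<ge> 1" "Susp K d t"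
  shows "Act0 K d t"
proof -
  let ?p = "d (K*(t-1))"
  have lt: "K*(t-1) < K*t" using assms(1,2) by simp
  have sub: "{v \<in> {K*(t-1)<..K*t}. ?p \<le> d v} \<subseteq> insert (K*t) {v \<in> {K*(t-1)<..<K*t}. ?p \<le> d v}"
    by auto
  have "card {v \<in> {K*(t-1)<..K*t}. ?p \<le> d v} \<le> card (insert (K*t) {v \<in> {K*(t-1)<..<K*t}. ?p \<le> d v})"
    by (rule card_mono[OF _ sub]) simp
  also have "\<dots> \<le> card {v \<in> {K*(t-1)<..<K*t}. ?p \<le> d v} + 1"
    by (simp add: card_insert_if)
  finally have c: "card {v \<in> {K*(t-1)<..K*t}. ?p \<le> d v} \<le> card {v \<in> {K*(t-1)<..<K*t}. ?p \<le> d v} + 1" .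
  have "\<forall>v\<in>{K*(t-1)<..K*t}. d v \<le> K + ?p"
  proof
    fix v assume v: "v \<in> {K*(t-1)<..K*t}"
    show "d v \<le> K + ?p"
    proof (cases "v = K*t")
      case True then show ?thesis using assms(3) by (simp add: Susp_def)
    next
      case False then have "v \<in> {K*(t-1)<..<K*t}" using v by auto
      then show ?thesis using assms(3) by (simp add: Susp_def)
    qed
  qed
  then show ?thesis using assms(3) c unfolding Susp_def Act0_def by auto
qed

lemma wrap:
  assumes k: "k \<ge> 2" and K: "K = k - 1"
    and su: "\<And>t. 1 \<le> t \<Longrightarrow> t < s0 \<Longrightarrow> Susp K d t" and ac: "Act0 K d s0"
    and s0: "1 \<le> s0" "s0 \<le> n" and ab: "\<And>v. v \<in> {K*s0<..hp_r n k} \<Longrightarrow> d v < K"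
  shows "Inv n k d"
proof (cases "stable n k d")
  case True
  have "d 0 \<le> K"
  proof (cases "s0 = 1")
    case True then show ?thesis using ac by (simp add: Act0_def)
  next
    case False then have "Susp K d 1" using su s0 by simp
    then show ?thesis by (simp add: Susp_def)
  qed
  then show ?thesis using True K by (simp add: Inv_def)
next
  case False
  note F = False
  let ?u = "u_fire n k d"
  have K1: "K \<ge> 1" using k K by simp
  have u1: "?u \<in> {1..hp_r n k}" "k - 1 \<le> d ?u" using ufire_props[OF k False] by auto
  have ule: "?u \<le> K*s0"
  proof (rule ccontr)
    assume "\<not> ?u \<le> K*s0"
    then have "?u \<in> {K*s0<..hp_r n k}" using u1 by auto
    then have "d ?u < K" by (rule ab)
    then show False using u1 K by simp
  qed
  obtain s where s: "1 \<le> s" "s \<le> n" "?u \<in> {K*(s-1)<..K*s}"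
    using level_exists[OF K1, of ?u n] u1 by (auto simp: hp_r_def K mult.commute)
  have ss0: "s \<le> s0" using level_le[OF K1 s(3) ule] .
  have "Act0 K d s"
  proof (cases "s = s0")
    case True then show ?thesis using ac by simp
  next
    case False then show ?thesis using Susp_Act0[OF K1 s(1) su[OF s(1)]] ss0 by simp
  qed
  moreover have "\<forall>t. 1 \<le> t \<longrightarrow> t < s \<longrightarrow> Susp K d t" using su ss0 by simp
  ultimately show ?thesis using F s K unfolding Inv_def by blast
qed

lemma ef_u: "ext_fire k d u e u = d u - (k-1)" by (simp add: ext_fire_def)
lemma ef_in: "v \<noteq> u \<Longrightarrow> v \<in> e \<Longrightarrow> ext_fire k d u e v = d v + 1" by (simp add: ext_fire_def)
lemma ef_out: "v \<noteq> u \<Longrightarrow> v \<notin> e \<Longrightarrow> ext_fire k d u e v = d v" by (simp add: ext_fire_def)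

lemma step_case1:
  assumes k: "k \<ge> 2" and K: "K = k - 1" and ns: "\<not> stable n k d"
    and s: "1 \<le> s" "s \<le> n" "u_fire n k d \<in> {K*(s-1)<..K*s}"
    and su: "\<And>t. 1 \<le> t \<Longrightarrow> t < s \<Longrightarrow> Susp K d t" and ac: "Act0 K d s"
  shows "Inv n k (ext_fire k d (u_fire n k d) {K*(s-1)..K*s})"
proof -
  let ?u = "u_fire n k d"
  let ?e = "{K*(s-1)..K*s}"
  let ?d = "ext_fire k d ?u ?e"
  let ?p = "d (K*(s-1))"
  define A where "A = {v \<in> {K*(s-1)<..K*s}. ?p \<le> d v}"
  have K1: "K \<ge> 1" using k K by simp
  have u1: "?u \<in> {1..hp_r n k}" "K \<le> d ?u" using ufire_props[OF k ns] K by auto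
  have abv: "\<And>v. v \<in> {1..hp_r n k} \<Longrightarrow> ?u < v \<Longrightarrow> d v < K"
    using above_ufire[OF k ns] K by auto
  have pc: "?p + card A \<le> K" and vb: "\<And>v. v \<in> {K*(s-1)<..K*s} \<Longrightarrow> d v \<le> K + ?p"
    and top: "d (K*s) \<le> K" using ac unfolding Act0_def A_def by auto
  have uA: "?u \<in> A" using s(3) pc u1 unfolding A_def by auto
  have finA: "finite A" unfolding A_def by simp
  have cA: "card A \<ge> 1" using uA finA by (metis One_nat_def Suc_leI card_gt_0_iff empty_iff)
  have pK: "?p < K" using pc cA by linarith
  have ubelow: "K*(s-1) < ?u" "?u \<le> K*s" using s(3) by auto
  have dp: "?d (K*(s-1)) = ?p + 1" using ubelow by (intro ef_in) auto
  have du: "?d ?u = d ?u - K" using K by (simp add: ef_u)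
  have dub: "d ?u \<le> K + ?p" using vb s(3) by blast
  define A' where "A' = {v \<in> {K*(s-1)<..K*s}. ?d (K*(s-1)) \<le> ?d v}"
  have sub: "A' \<subseteq> A - {?u}"
  proof
    fix v assume v: "v \<in> A'"
    show "v \<in> A - {?u}"
    proof (cases "v = ?u")
      case True
      then show ?thesis using v du dub dp unfolding A'_def by auto
    next
      case False
      then have "?d v = d v + 1" using v unfolding A'_def by (intro ef_in) auto
      then show ?thesis using v dp False unfolding A'_def A_def by auto
    qed
  qed
  have "card A' \<le> card (A - {?u})" using finA sub by (intro card_mono) auto
  also have "\<dots> = card A - 1" using uA finA by simp
  finally have cA': "card A' \<le> card A - 1" .
  have act: "Act0 K ?d s"
    unfolding Act0_def
  proof (intro conjI ballI)
    show "?d (K*(s-1)) + card {v \<in> {K*(s-1)<..K*s}. ?d (K*(s-1)) \<le> ?d v} \<le> K"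
      using cA' pc cA dp unfolding A'_def[symmetric] by linarith
  next
    fix v assume v: "v \<in> {K*(s-1)<..K*s}"
    show "?d v \<le> K + ?d (K*(s-1))"
    proof (cases "v = ?u")
      case True then show ?thesis using du dp dub by simp
    next
      case False then have "?d v = d v + 1" using v by (intro ef_in) auto
      then show ?thesis using vb[OF v] dp by simp
    qed
  next
    show "?d (K*s) \<le> K"
    proof (cases "K*s = ?u")
      case True then show ?thesis using du dub pK by simp
    next
      case False
      then have lt: "?u < K*s" using ubelow by simp
      have "K*s \<le> hp_r n k" using s(2) K by (simp add: hp_r_def mult.commute)
      moreover have "1 \<le> K*s" using K1 s(1) by simp
      ultimately have "d (K*s) < K" using abv lt by auto
      moreover have "?d (K*s) = d (K*s) + 1" using False by (intro ef_in) auto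
      ultimately show ?thesis by simp
    qed
  qed
  have sus: "Susp K ?d t" if t: "1 \<le> t" "t < s" for t
  proof (rule Susp_transfer[OF K1 t(1) su[OF t]])
    have le: "K*t \<le> K*(s-1)" using t by (intro mult_le_mono2) simp
    show "?d v = d v" if "v < K*t" for v
    proof -
      have "v < K*(s-1)" using that le by (rule less_le_trans)
      then show ?thesis using ubelow by (intro ef_out) auto
    qed
    show "?d (K*t) \<le> K"
    proof (cases "t = s - 1")
      case True then show ?thesis using dp pK by simp
    next
      case False
      then have "t < s - 1" using t by simp
      then have lt2: "K*t < K*(s-1)" using K1 by simp
      have "K*t < ?u" using lt2 ubelow(1) by (rule less_trans)
      then have "?d (K*t) = d (K*t)" using lt2 by (intro ef_out) auto
      then show ?thesis using su[OF t] by (simp add: Susp_def)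
    qed
  qed
  have ab: "?d v < K" if v: "v \<in> {K*s<..hp_r n k}" for v
  proof -
    have "?d v = d v" using v ubelow by (intro ef_out) auto
    moreover have "d v < K" using v ubelow abv by auto
    ultimately show ?thesis by simp
  qed
  show ?thesis by (rule wrap[OF k K sus act s(1) s(2) ab])
qed

lemma step_case2:
  assumes k: "k \<ge> 2" and K: "K = k - 1" and ns: "\<not> stable n k d"
    and s: "1 \<le> s" "s < n" "u_fire n k d = K*s"
    and su: "\<And>t. 1 \<le> t \<Longrightarrow> t < s \<Longrightarrow> Susp K d t" and ac: "Act0 K d s"
  shows "Inv n k (ext_fire k d (u_fire n k d) {K*s..K*(s+1)})"
proof -
  let ?u = "u_fire n k d"
  let ?e = "{K*s..K*(s+1)}"
  let ?d = "ext_fire k d ?u ?e"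
  let ?p = "d (K*(s-1))"
  have K1: "K \<ge> 1" using k K by simp
  have u1: "?u \<in> {1..hp_r n k}" "K \<le> d ?u" using ufire_props[OF k ns] K by auto
  have abv: "\<And>v. v \<in> {1..hp_r n k} \<Longrightarrow> ?u < v \<Longrightarrow> d v < K"
    using above_ufire[OF k ns] K by auto
  have pc: "?p + card {v \<in> {K*(s-1)<..K*s}. ?p \<le> d v} \<le> K"
    and vb: "\<And>v. v \<in> {K*(s-1)<..K*s} \<Longrightarrow> d v \<le> K + ?p"
    and top: "d (K*s) \<le> K" using ac unfolding Act0_def by auto
  have duK: "d ?u = K" using top u1 s(3) by simp
  have du0: "?d ?u = 0" using duK K by (simp add: ef_u)
  have lt: "K*(s-1) < K*s" using K1 s(1) by simp
  have rr: "K*(s+1) \<le> hp_r n k"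
  proof -
    have "K*(s+1) \<le> K*n" using s(2) by (intro mult_le_mono2) simp
    then show ?thesis using K by (simp add: hp_r_def mult.commute)
  qed
  have act: "Act0 K ?d (s+1)"
    unfolding Act0_def
  proof (intro conjI ballI)
    have "card {v \<in> {K*(s+1-1)<..K*(s+1)}. ?d (K*(s+1-1)) \<le> ?d v} \<le> card {K*s<..K*(s+1)}"
      by (intro card_mono) auto
    also have "\<dots> = K" by (simp add: algebra_simps)
    finally show "?d (K*(s+1-1)) + card {v \<in> {K*(s+1-1)<..K*(s+1)}. ?d (K*(s+1-1)) \<le> ?d v} \<le> K"
      using du0 s(3) by simp
  next
    have gen: "?d v \<le> K" if v: "v \<in> {K*s<..K*(s+1)}" for v
    proof -
      have "?d v = d v + 1" using v s(3) by (intro ef_in) auto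
      moreover have "d v < K" using v s(3) rr K1 by (intro abv) auto
      ultimately show ?thesis by simp
    qed
    fix v assume "v \<in> {K*(s+1-1)<..K*(s+1)}"
    then have "?d v \<le> K" using gen by simp
    then show "?d v \<le> K + ?d (K*(s+1-1))" by simp
  next
    have "K*s < K*(s+1)" using K1 by simp
    then have v: "K*(s+1) \<in> {K*s<..K*(s+1)}" by simp
    have "?d (K*(s+1)) = d (K*(s+1)) + 1" using v s(3) by (intro ef_in) auto
    moreover have "d (K*(s+1)) < K" using v s(3) rr K1 by (intro abv) auto
    ultimately show "?d (K*(s+1)) \<le> K" by simp
  qed
  have agree: "?d v = d v" if "v < K*s" for v
    using that s(3) by (intro ef_out) auto
  have suss: "Susp K ?d s"
    unfolding Susp_def
  proof (intro conjI ballI)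
    define Ai where "Ai = {v \<in> {K*(s-1)<..<K*s}. ?p \<le> d v}"
    have "{v \<in> {K*(s-1)<..K*s}. ?p \<le> d v} = insert (K*s) Ai"
      using duK s(3) pc lt unfolding Ai_def by auto
    moreover have "K*s \<notin> Ai" "finite Ai" unfolding Ai_def by auto
    ultimately have cc: "card {v \<in> {K*(s-1)<..K*s}. ?p \<le> d v} = card Ai + 1" by simp
    have dp: "?d (K*(s-1)) = ?p" using agree lt by blast
    have "{v \<in> {K*(s-1)<..<K*s}. ?d (K*(s-1)) \<le> ?d v} = Ai"
      unfolding Ai_def using dp agree by auto
    then show "?d (K*(s-1)) + 1 + card {v \<in> {K*(s-1)<..<K*s}. ?d (K*(s-1)) \<le> ?d v} \<le> K"
      using cc pc dp by simp
    fix v assume v: "v \<in> {K*(s-1)<..<K*s}"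
    then show "?d v \<le> K + ?d (K*(s-1))" using agree vb[of v] dp by auto
  next
    show "?d (K*s) \<le> K" using du0 s(3) by simp
  qed
  have sus: "Susp K ?d t" if t: "1 \<le> t" "t < s + 1" for t
  proof (cases "t = s")
    case True then show ?thesis using suss by simp
  next
    case False
    then have ts: "t < s" using t by simp
    show ?thesis
    proof (rule Susp_transfer[OF K1 t(1) su[OF t(1) ts]])
      have le: "K*t < K*s" using ts K1 by simp
      show "?d v = d v" if "v < K*t" for v
        using agree less_trans[OF that le] by blast
      show "?d (K*t) \<le> K" using agree[OF le] su[OF t(1) ts] by (simp add: Susp_def)
    qed
  qed
  have ab: "?d v < K" if v: "v \<in> {K*(s+1)<..hp_r n k}" for v
  proof -
    have "?d v = d v" using v s(3) by (intro ef_out) auto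
    moreover have "K*s < K*(s+1)" using K1 by simp
    then have "d v < K" using v s(3) by (intro abv) auto
    ultimately show ?thesis by simp
  qed
  show ?thesis by (rule wrap[OF k K sus act _ _ ab]) (use s in auto)
qed

lemma step_inv:
  assumes k: "k \<ge> 2" and inv: "Inv n k d" and ns: "\<not> stable n k d"
    and t: "1 \<le> t" "t \<le> n" and ue: "u_fire n k d \<in> hp_edge k t"
  shows "Inv n k (ext_fire k d (u_fire n k d) (hp_edge k t))"
proof -
  define K where "K = k - 1"
  have K1: "K \<ge> 1" using k by (simp add: K_def)
  obtain s where s: "1 \<le> s" "s \<le> n" "u_fire n k d \<in> {K*(s-1)<..K*s}"
    and su: "\<And>t. 1 \<le> t \<Longrightarrow> t < s \<Longrightarrow> Susp K d t" and ac: "Act0 K d s"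
    using inv ns unfolding Inv_def K_def by blast
  have he: "hp_edge k t = {K*(t-1)..K*t}" by (simp add: hp_edge_def K_def)
  have "t = s \<or> (t = s+1 \<and> u_fire n k d = K*s)"
    using edge_level[OF K1 s(3)] ue he by simp
  then show ?thesis
  proof
    assume "t = s"
    then show ?thesis using step_case1[OF k K_def ns s su ac] he by simp
  next
    assume a: "t = s+1 \<and> u_fire n k d = K*s"
    then have "s < n" using t by simp
    then show ?thesis using step_case2[OF k K_def ns s(1) _ _ su ac] a he by simp
  qed
qed

lemma sum_ef:
  fixes d :: "nat \<Rightarrow> nat"
  assumes "u \<in> e" "e \<subseteq> {0..r}" "card e = k" "k - 1 \<le> d u"
  shows "(\<Sum>v=0..r. ext_fire k d u e v) = (\<Sum>v=0..r. d v)"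
proof -
  have pw: "ext_fire k d u e v + (k-1) * of_bool (v = u) = d v + of_bool (v \<in> e - {u})" for v
    using assms(4) by (auto simp: ext_fire_def)
  have "(\<Sum>v=0..r. ext_fire k d u e v + (k-1) * of_bool (v = u)) = (\<Sum>v=0..r. d v + of_bool (v \<in> e - {u}))"
    using pw by simp
  then have "(\<Sum>v=0..r. ext_fire k d u e v) + (k-1) * (\<Sum>v=0..r. of_bool (v = u))
      = (\<Sum>v=0..r. d v) + (\<Sum>v=0..r. of_bool (v \<in> e - {u}) :: nat)"
    by (simp add: sum.distrib sum_distrib_left mult.commute)
  moreover have "(\<Sum>v=0..r. of_bool (v = u) :: nat) = 1"
    using assms(1,2) by auto
  moreover have "(\<Sum>v=0..r. of_bool (v \<in> e - {u}) :: nat) = k - 1"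
  proof -
    have "{0..r} \<inter> {v. v \<in> e - {u}} = e - {u}" using assms(2) by auto
    moreover have "finite e" using assms(2) finite_subset by blast
    ultimately show ?thesis using assms(1,3) by simp
  qed
  ultimately show ?thesis by simp
qed

lemma sum0: "(\<Sum>v=0..r. f v) = f 0 + (\<Sum>v=1..r. (f::nat\<Rightarrow>nat) v)"
  by (simp add: sum.atLeast_Suc_atMost)

lemma weight_eq: "(\<And>v. v \<noteq> 0 \<Longrightarrow> f v = g v) \<Longrightarrow> weight n k f = (\<Sum>v=1..hp_r n k. g v)"
  unfolding weight_def by (intro sum.cong) auto

lemma reach_inv:
  assumes k: "k \<ge> 2" and n: "n \<ge> 1" and cf: "is_config n k c0" and st: "stable n k c0"
    and r: "reach n k c0 c"
  shows "\<exists>b. Inv n k (c(0:=b)) \<and> b + weight n k c = weight n k c0 + (k - 1)"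
  using r
proof (induction rule: reach.induct)
  case start
  define K where "K = k - 1"
  have K1: "K \<ge> 1" using k by (simp add: K_def)
  let ?d = "(cbar k c0)(0 := 0)"
  have Kr: "K \<le> hp_r n k" using n by (simp add: hp_r_def K_def)
  have c0b: "c0 v \<le> K - 1" if "v \<in> {1..hp_r n k}" for v
  proof -
    have "c0 v \<le> k - 2" using st that unfolding stable_def by blast
    then show ?thesis by (simp add: K_def)
  qed
  have act: "Act0 K ?d 1"
    unfolding Act0_def
  proof (intro conjI ballI)
    have "card {v \<in> {K*(1-1)<..K*1}. ?d (K*(1-1)) \<le> ?d v} \<le> card {0<..K}"
      by (intro card_mono) auto
    then show "?d (K*(1-1)) + card {v \<in> {K*(1-1)<..K*1}. ?d (K*(1-1)) \<le> ?d v} \<le> K" by simp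
  next
    fix v assume v: "v \<in> {K*(1-1)<..K*1}"
    then have "v \<in> {1..hp_r n k}" using Kr by auto
    then have "c0 v \<le> K - 1" by (rule c0b)
    then show "?d v \<le> K + ?d (K*(1-1))" using v k by (simp add: cbar_def K_def)
  next
    have "K \<in> {1..hp_r n k}" using Kr K1 by auto
    then have "c0 K \<le> K - 1" by (rule c0b)
    then show "?d (K*1) \<le> K" using K1 k by (simp add: cbar_def K_def)
  qed
  have ab: "?d v < K" if v: "v \<in> {K*1<..hp_r n k}" for v
  proof -
    have "v \<in> {1..hp_r n k}" using v K1 by auto
    then have "c0 v \<le> K - 1" by (rule c0b)
    then show ?thesis using v K1 k by (simp add: cbar_def K_def)
  qed
  have inv: "Inv n k ?d" by (rule wrap[OF k K_def _ act _ n ab]) auto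
  have "weight n k (cbar k c0) = (\<Sum>v=1..hp_r n k. c0 v + of_bool (v \<in> {1..K}))"
    unfolding weight_def cbar_def K_def by (intro sum.cong) auto
  also have "\<dots> = weight n k c0 + K"
  proof -
    have "{1..hp_r n k} \<inter> {v. v \<le> K} = {1..K}" using Kr by auto
    then show ?thesis by (simp add: sum.distrib weight_def)
  qed
  finally have w: "weight n k (cbar k c0) = weight n k c0 + K" .
  show ?case
  proof (rule exI[of _ 0], rule conjI)
    show "Inv n k ((cbar k c0)(0 := 0))" by (rule inv)
    show "0 + weight n k (cbar k c0) = weight n k c0 + (k - 1)" using w by (simp add: K_def)
  qed
next
  case (step c t)
  obtain b where ib: "Inv n k (c(0:=b))" and wb: "b + weight n k c = weight n k c0 + (k - 1)"
    using step.IH by blast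
  let ?d = "c(0:=b)"
  let ?u = "u_fire n k c"
  let ?e = "hp_edge k t"
  let ?D = "ext_fire k ?d ?u ?e"
  have ns: "\<not> stable n k ?d" using step.hyps(2) by (simp add: stable_upd)
  have uu: "u_fire n k ?d = ?u" by (simp add: ufire_upd)
  have u1: "?u \<in> {1..hp_r n k}" "k - 1 \<le> ?d ?u" using ufire_props[OF k ns] uu by auto
  have invD: "Inv n k ?D" using step_inv[OF k ib ns] step.hyps(3,4) uu by auto
  have eqD: "(fire_on n k c ?e)(0 := ?D 0) = ?D"
  proof
    fix v show "((fire_on n k c ?e)(0 := ?D 0)) v = ?D v"
      using u1 by (cases "v = 0") (auto simp: fire_on_def ext_fire_def)
  qed
  have esub: "?e \<subseteq> {0..hp_r n k}"
  proof -
    have "(k-1)*t \<le> (k-1)*n" using step.hyps(3) by (intro mult_le_mono2) simp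
    then show ?thesis by (auto simp: hp_edge_def hp_r_def mult.commute)
  qed
  have ecard: "card ?e = k"
  proof -
    have "(k-1)*t - (k-1)*(t-1) = k - 1" using step.hyps(3)
      by (metis diff_mult_distrib2 diff_diff_cancel le_numeral_extra(4) mult.right_neutral
          atLeastAtMost_iff)
    moreover have "(k-1)*(t-1) \<le> (k-1)*t" by (intro mult_le_mono2) simp
    ultimately show ?thesis using k by (simp add: hp_edge_def)
  qed
  have sD: "(\<Sum>v=0..hp_r n k. ?D v) = (\<Sum>v=0..hp_r n k. ?d v)"
    by (rule sum_ef[of ?u ?e "hp_r n k" k ?d, OF step.hyps(4) esub ecard u1(2)])
  have wc': "weight n k (fire_on n k c ?e) = (\<Sum>v=1..hp_r n k. ?D v)"
    by (rule weight_eq) (subst eqD[symmetric], simp)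
  have wc: "weight n k c = (\<Sum>v=1..hp_r n k. ?d v)"
    by (rule weight_eq) simp
  have "?D 0 + weight n k (fire_on n k c ?e) = b + weight n k c"
    using sD wc wc' sum0[of ?D] sum0[of ?d] by simp
  then show ?case using invD eqD wb by (intro exI[of _ "?D 0"]) simp
qed

lemma inv_bank:
  assumes "Inv n k d" shows "d 0 \<le> k - 1"
proof (cases "stable n k d")
  case True then show ?thesis using assms by (simp add: Inv_def)
next
  case False
  then obtain s where s: "1 \<le> s" and su: "\<And>t. 1 \<le> t \<Longrightarrow> t < s \<Longrightarrow> Susp (k-1) d t"
    and ac: "Act0 (k-1) d s" using assms unfolding Inv_def by blast
  show ?thesis
  proof (cases "s = 1")
    case True then show ?thesis using ac by (simp add: Act0_def)
  next
    case False then have "Susp (k-1) d 1" using su s by simp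
    then show ?thesis by (simp add: Susp_def)
  qed
qed

lemma junction:
  assumes k: "k \<ge> 2" and inv: "Inv n k d" and ns: "\<not> stable n k d" and t: "1 \<le> t" "t \<le> n"
  shows "u_fire n k d = (k-1)*t \<longleftrightarrow> d ((k-1)*t) = k - 1"
proof -
  define K where "K = k - 1"
  have K1: "K \<ge> 1" using k by (simp add: K_def)
  let ?u = "u_fire n k d"
  obtain s where s: "1 \<le> s" "s \<le> n" "?u \<in> {K*(s-1)<..K*s}"
    and su: "\<And>t. 1 \<le> t \<Longrightarrow> t < s \<Longrightarrow> Susp K d t" and ac: "Act0 K d s"
    using inv ns unfolding Inv_def K_def by blast
  have u1: "?u \<in> {1..hp_r n k}" "K \<le> d ?u" using ufire_props[OF k ns] by (auto simp: K_def)
  have abv: "\<And>v. v \<in> {1..hp_r n k} \<Longrightarrow> ?u < v \<Longrightarrow> d v < K"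
    using above_ufire[OF k ns] K_def by auto
  have tr: "K*t \<in> {1..hp_r n k}"
  proof -
    have "K*t \<le> K*n" using t by (intro mult_le_mono2) simp
    moreover have "1 \<le> K*t" using K1 t by simp
    ultimately show ?thesis by (simp add: hp_r_def K_def mult.commute)
  qed
  have "?u = K*t \<longleftrightarrow> d (K*t) = K"
  proof
    assume a: "?u = K*t"
    have "K*t \<in> {K*(t-1)..K*t}" by simp
    then have "t = s \<or> (t = s+1 \<and> ?u = K*s)" using edge_level[OF K1 s(3)] a by simp
    then have "t = s" using a K1 by auto
    then show "d (K*t) = K" using ac a u1 by (simp add: Act0_def)
  next
    assume a: "d (K*t) = K"
    show "?u = K*t"
    proof (rule ccontr)
      assume ne: "?u \<noteq> K*t"
      show False
      proof (cases "K*t < ?u")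
        case False
        then have "?u < K*t" using ne by simp
        then have "d (K*t) < K" using abv tr by blast
        then show False using a by simp
      next
        case True
        have "?u \<le> K*s" using s(3) by simp
        with True have "K*t < K*s" by (rule less_le_trans)
        then have ts: "t < s" by simp
        show False
        proof (cases "t + 1 = s")
          case True
          define A where "A = {v \<in> {K*(s-1)<..K*s}. d (K*(s-1)) \<le> d v}"
          have "s - 1 = t" using True by simp
          then have p: "d (K*(s-1)) = K" using a by simp
          have "?u \<in> A" using s(3) u1 p unfolding A_def by auto
          moreover have "finite A" unfolding A_def by simp
          ultimately have "card A \<ge> 1" by (metis One_nat_def Suc_leI card_gt_0_iff empty_iff)
          moreover have "d (K*(s-1)) + card A \<le> K" using ac unfolding Act0_def A_def by auto
          ultimately show False using p by simp
        next
          case False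
          then have "Susp K d (t+1)" using su ts by simp
          then show False using a by (simp add: Susp_def)
        qed
      qed
    qed
  qed
  then show ?thesis by (simp add: K_def)
qed

theorem lemma4p1:
  fixes n k :: nat and c0 :: "nat \<Rightarrow> nat"
  assumes "n \<ge> 1" and "k \<ge> 2"
    and "is_config n k c0" and "stable n k c0"
  shows "(\<forall>t\<in>{1..n}. \<forall>c\<in>firing_graph_vertices n k c0.
            (\<not> stable n k c \<and> u_fire n k c = t * (k - 1)) \<longleftrightarrow> c (t * (k - 1)) = k - 1)
       \<and> (\<forall>c\<in>firing_graph_vertices n k c0. weight n k c \<ge> weight n k c0)"
proof (intro conjI ballI)
  fix t c assume t: "t \<in> {1..n}" and c: "c \<in> firing_graph_vertices n k c0"
  have tr: "t*(k-1) \<in> {1..hp_r n k}"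
  proof -
    have "(k-1)*t \<le> (k-1)*n" using t by (intro mult_le_mono2) simp
    moreover have "1 \<le> (k-1)*t" using assms(2) t by simp
    ultimately show ?thesis by (simp add: hp_r_def mult.commute)
  qed
  have st0: "\<And>c. stable n k c \<Longrightarrow> c (t*(k-1)) \<noteq> k - 1"
    using tr assms(2) unfolding stable_def by fastforce
  show "(\<not> stable n k c \<and> u_fire n k c = t * (k - 1)) \<longleftrightarrow> c (t * (k - 1)) = k - 1"
  proof (cases "c = c0")
    case True then show ?thesis using st0 assms(4) by auto
  next
    case False
    then have "reach n k c0 c" using c by (simp add: firing_graph_vertices_def)
    then obtain b where ib: "Inv n k (c(0:=b))" using reach_inv assms by blast
    show ?thesis
    proof (cases "stable n k c")
      case True then show ?thesis using st0 by auto
    next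
      case False
      then have ns: "\<not> stable n k (c(0:=b))" by (simp add: stable_upd)
      have j: "u_fire n k (c(0:=b)) = (k-1)*t \<longleftrightarrow> (c(0:=b)) ((k-1)*t) = k - 1"
        using junction[OF assms(2) ib ns] t by simp
      have "t*(k-1) \<noteq> 0" using tr by auto
      then show ?thesis using j False by (simp add: ufire_upd mult.commute)
    qed
  qed
next
  fix c assume c: "c \<in> firing_graph_vertices n k c0"
  show "weight n k c \<ge> weight n k c0"
  proof (cases "c = c0")
    case False
    then have "reach n k c0 c" using c by (simp add: firing_graph_vertices_def)
    then obtain b where ib: "Inv n k (c(0:=b))" and w: "b + weight n k c = weight n k c0 + (k - 1)"
      using reach_inv assms by blast
    have "b \<le> k - 1" using inv_bank[OF ib] by simp
    then show ?thesis using w by linarith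
  qed simp
qed

end
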